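(* Let $1\le m$ and $m+2\le n$, and let $X_{1:n}\le\cdots\le X_{n:n}$ be the order statistics of an i.i.d. sample of size $n$ from the density $\theta e^{-\theta t}\mathbb{I}_{(0,\infty)}(t)$. Let $X=\sum_{i=1}^m X_{i:n}+(n-m)X_{m:n}$, $Y_1=X_{m+1:n}-X_{m:n}$, $Y_2=X_{m+2:n}-X_{m+1:n}$. Put on $\theta$ the prior $\pi_{\alpha,\beta}(\theta)\propto\theta^{\alpha-1}e^{-\beta\theta}\mathbb{I}_{(0,\infty)}(\theta)$, with either $\alpha,\beta>0$ or $\alpha=\beta=0$. Then for every $x>0$ the Bayes predictive density of $(Y_1,Y_2)$ given $X=x$ is the bivariate Pareto type II density $\mathcal{P}2(m+\alpha,h_1,h_2)$ with $h_1=\frac{n-m}{x+\beta}$, $h_2=\frac{n-m-1}{x+\beta}$, i.e. $\dfrac{(m+\alpha)(m+\alpha+1)h_1h_2}{(1+h_1y_1+h_2y_2)^{m+\alpha+2}}$ on $\mathbb{R}_+^2$.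
   Context: The Bayes predictive density of $Y$ given $X=x$ under prior $\pi$ is $\hat q_\pi(y|x)=\int_0^\infty q_\theta(y|x)\,\pi(\theta|x)\,d\theta$, where $q_\theta(\cdot|x)$ is the conditional density of $Y$ given $X=x$ under parameter $\theta$ and $\pi(\theta|x)$ is the posterior density. *)

theory Defs
  imports "HOL-Probability.Probability"
begin

definition sample_measure :: "nat \<Rightarrow> real \<Rightarrow> (nat \<Rightarrow> real) measure" where
  "sample_measure n \<theta> = PiM {..<n} (\<lambda>_. density lborel (exponential_density \<theta>))"

definition order_stat :: "nat \<Rightarrow> nat \<Rightarrow> (nat \<Rightarrow> real) \<Rightarrow> real" where
  "order_stat n i \<omega> = sort (map \<omega> [0..<n]) ! (i - 1)"

definition statX :: "nat \<Rightarrow> nat \<Rightarrow> (nat \<Rightarrow> real) \<Rightarrow> real" where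
  "statX n m \<omega> = (\<Sum>i=1..m. order_stat n i \<omega>) + real (n - m) * order_stat n m \<omega>"

definition statY :: "nat \<Rightarrow> nat \<Rightarrow> (nat \<Rightarrow> real) \<Rightarrow> real \<times> real" where
  "statY n m \<omega> = (order_stat n (m+1) \<omega> - order_stat n m \<omega>,
                   order_stat n (m+2) \<omega> - order_stat n (m+1) \<omega>)"

definition prior :: "real \<Rightarrow> real \<Rightarrow> real \<Rightarrow> real" where
  "prior \<alpha> \<beta> \<theta> = (if 0 < \<theta> then \<theta> powr (\<alpha> - 1) * exp (- \<beta> * \<theta>) else 0)"

definition marg_X :: "(real \<Rightarrow> real \<Rightarrow> real \<Rightarrow> real \<Rightarrow> real) \<Rightarrow> real \<Rightarrow> real \<Rightarrow> real" where
  "marg_X f \<theta> x = (\<integral>y\<in>{0<..} \<times> {0<..}. f \<theta> x (fst y) (snd y) \<partial>lborel)"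

definition cond_dens :: "(real \<Rightarrow> real \<Rightarrow> real \<Rightarrow> real \<Rightarrow> real) \<Rightarrow> real \<Rightarrow> real \<Rightarrow> real \<Rightarrow> real \<Rightarrow> real" where
  "cond_dens f \<theta> x y1 y2 = f \<theta> x y1 y2 / marg_X f \<theta> x"

definition posterior :: "(real \<Rightarrow> real \<Rightarrow> real \<Rightarrow> real \<Rightarrow> real) \<Rightarrow> real \<Rightarrow> real \<Rightarrow> real \<Rightarrow> real \<Rightarrow> real" where
  "posterior f \<alpha> \<beta> x \<theta> =
     marg_X f \<theta> x * prior \<alpha> \<beta> \<theta> / (\<integral>t\<in>{0<..}. marg_X f t x * prior \<alpha> \<beta> t \<partial>lborel)"

definition bayes_pred :: "(real \<Rightarrow> real \<Rightarrow> real \<Rightarrow> real \<Rightarrow> real) \<Rightarrow> real \<Rightarrow> real \<Rightarrow> real \<Rightarrow> real \<Rightarrow> real \<Rightarrow> real" where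
  "bayes_pred f \<alpha> \<beta> x y1 y2 =
     (\<integral>\<theta>\<in>{0<..}. cond_dens f \<theta> x y1 y2 * posterior f \<alpha> \<beta> x \<theta> \<partial>lborel)"

definition pareto2_biv :: "real \<Rightarrow> real \<Rightarrow> real \<Rightarrow> real \<Rightarrow> real \<Rightarrow> real" where
  "pareto2_biv a h1 h2 y1 y2 = a * (a + 1) * h1 * h2 / (1 + h1 * y1 + h2 * y2) powr (a + 2)"

end

theory Submission
  imports Defs
begin


definition vec :: "real list \<Rightarrow> nat \<Rightarrow> real" where
  "vec l = (\<lambda>i. if i < length l then l ! i else 0)"

definition sv :: "nat \<Rightarrow> (nat \<Rightarrow> real) \<Rightarrow> nat \<Rightarrow> real" where
  "sv n \<omega> = vec (sort (map (\<lambda>i. max 0 (\<omega> i)) [0..<n]))"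

definition insF :: "nat \<Rightarrow> real \<Rightarrow> (nat \<Rightarrow> real) \<Rightarrow> nat \<Rightarrow> real" where
  "insF n x v = (\<lambda>i. if i = 0 then (if n = 0 then x else min x (v 0))
       else if i < n then max (v (i-1)) (min x (v i))
       else if i = n then max (v (n-1)) x else 0)"

definition ins :: "nat \<Rightarrow> real \<Rightarrow> (nat \<Rightarrow> real) \<Rightarrow> nat \<Rightarrow> real" where
  "ins n s v = insF n (max 0 s) v"

definition cns :: "nat \<Rightarrow> real \<Rightarrow> (nat \<Rightarrow> real) \<Rightarrow> nat \<Rightarrow> real" where
  "cns n t v = (\<lambda>i. if i = 0 then t else if i \<le> n then v (i-1) + t else 0)"

lemma insort_nth:
  "sorted l \<Longrightarrow> i \<le> length l \<Longrightarrow> insort x l ! i =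
     (if i = 0 then (if l = [] then x else min x (l ! 0))
       else if i < length l then max (l ! (i-1)) (min x (l ! i))
       else max (l ! (length l - 1)) x)"
proof (induction l arbitrary: i)
  case Nil
  then show ?case by simp
next
  case (Cons y ys)
  show ?case
  proof (cases "x \<le> y")
    case True
    have "\<forall>z\<in>set (y#ys). x \<le> z" using True Cons.prems(1) by auto
    then have all: "\<And>k. k < length (y#ys) \<Longrightarrow> x \<le> (y#ys) ! k"
      using nth_mem by blast
    have "insort x (y#ys) = x # y # ys" using True by simp
    then show ?thesis using True Cons.prems all[of "i - 1"] all[of 0] all[of "length ys"]
      by (cases i) (auto simp: min_def max_def)
  next
    case False
    note ih = Cons.IH[of "i - 1"]
    show ?thesis
    proof (cases i)
      case 0 then show ?thesis using False by simp
    next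
      case (Suc j)
      have srt: "sorted ys" using Cons.prems by simp
      have ge: "\<forall>z\<in>set ys. y \<le> z" using Cons.prems by simp
      show ?thesis
      proof (cases "ys = []")
        case True then show ?thesis using Suc False Cons.prems by auto
      next
        case ne: False
        have "ys ! 0 \<in> set ys" using ne by simp
        then have y0: "y \<le> ys ! 0" using ge by blast
        have "j < length ys \<Longrightarrow> ys ! j \<in> set ys" by simp
        have "j - 1 < length ys \<Longrightarrow> ys ! (j-1) \<in> set ys" by simp
        then show ?thesis using Suc False Cons.prems ih srt y0 ne ge
          by (auto simp: nth_Cons' min_def max_def)
      qed
    qed
  qed
qed

lemma vec_insort:
  assumes "sorted l"
  shows "vec (insort x l) = insF (length l) x (vec l)"
proof
  fix i
  show "vec (insort x l) i = insF (length l) x (vec l) i"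
  proof (cases "i \<le> length l")
    case True
    then show ?thesis using insort_nth[OF assms True, of x]
      by (auto simp: vec_def insF_def length_insort hd_conv_nth)
  next
    case False
    then show ?thesis by (auto simp: vec_def insF_def length_insort)
  qed
qed

lemma sort_snoc: "sort (xs @ [x]) = insort x (sort xs)"
  by (rule properties_for_sort) (auto simp: mset_insort sorted_insort)

lemma length_sv_list: "length (sort (map (\<lambda>i. max 0 (\<omega> i)) [0..<n])) = n"
  by simp

lemma sv_Suc: "sv (Suc n) \<omega> = ins n (\<omega> n) (sv n \<omega>)"
  unfolding sv_def ins_def
  by (simp add: sort_snoc vec_insort)



abbreviation V :: "(nat \<Rightarrow> real) measure" where
  "V \<equiv> PiM UNIV (\<lambda>_. borel)"

lemma space_V[simp]: "space V = UNIV"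
  by (simp add: space_PiM)

lemma insF_meas[measurable]: "(\<lambda>(x, v). insF n x v) \<in> measurable (borel \<Otimes>\<^sub>M V) V"
proof -
  have "(\<lambda>z i. insF n (fst z) (snd z) i) \<in> measurable (borel \<Otimes>\<^sub>M V) V"
  proof (rule measurable_PiM_single')
    fix i :: nat
    show "(\<lambda>z. insF n (fst z) (snd z) i) \<in> measurable (borel \<Otimes>\<^sub>M V) borel"
      unfolding insF_def by measurable
  qed simp
  then show ?thesis by (simp add: case_prod_beta')
qed

lemma ins_meas[measurable]: "(\<lambda>(x, v). ins n x v) \<in> measurable (borel \<Otimes>\<^sub>M V) V"
proof -
  have "(\<lambda>z i. ins n (fst z) (snd z) i) \<in> measurable (borel \<Otimes>\<^sub>M V) V"
  proof (rule measurable_PiM_single')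
    fix i :: nat
    show "(\<lambda>z. ins n (fst z) (snd z) i) \<in> measurable (borel \<Otimes>\<^sub>M V) borel"
      unfolding ins_def insF_def by measurable
  qed simp
  then show ?thesis by (simp add: case_prod_beta')
qed

lemma cns_meas[measurable]: "(\<lambda>(x, v). cns n x v) \<in> measurable (borel \<Otimes>\<^sub>M V) V"
proof -
  have "(\<lambda>z i. cns n (fst z) (snd z) i) \<in> measurable (borel \<Otimes>\<^sub>M V) V"
  proof (rule measurable_PiM_single')
    fix i :: nat
    show "(\<lambda>z. cns n (fst z) (snd z) i) \<in> measurable (borel \<Otimes>\<^sub>M V) borel"
      unfolding cns_def by measurable
  qed simp
  then show ?thesis by (simp add: case_prod_beta')
qed

lemma sv_0: "sv 0 \<omega> = (\<lambda>_. 0)"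
  by (simp add: sv_def vec_def)

lemma sv_meas:
  assumes "\<And>i. i \<in> I \<Longrightarrow> sets (M i) = sets borel" "{..<n} \<subseteq> I"
  shows "sv n \<in> measurable (PiM I M) V"
  using assms(2)
proof (induction n)
  case 0
  then show ?case by (simp add: sv_0)
next
  case (Suc n)
  have n: "n \<in> I" using Suc.prems by auto
  have "{..<n} \<subseteq> I" using Suc.prems by auto
  then have 1: "sv n \<in> measurable (PiM I M) V" by (rule Suc.IH)
  have 2: "(\<lambda>\<omega>. \<omega> n) \<in> measurable (PiM I M) borel"
    using measurable_component_singleton[OF n, of M] assms(1)[OF n]
      measurable_cong_sets[of "PiM I M" "PiM I M" "M n" borel] by blast
  have "(\<lambda>\<omega>. ins n (\<omega> n) (sv n \<omega>)) \<in> measurable (PiM I M) V"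
    using measurable_compose[OF measurable_Pair[OF 2 1] ins_meas[of n]] by (simp add: case_prod_beta')
  moreover have "sv (Suc n) = (\<lambda>\<omega>. ins n (\<omega> n) (sv n \<omega>))"
    by (rule ext) (rule sv_Suc)
  ultimately show ?case by simp
qed



abbreviation Ex :: "real \<Rightarrow> real measure" where
  "Ex \<theta> \<equiv> density lborel (exponential_density \<theta>)"

definition Psi :: "nat \<Rightarrow> real \<Rightarrow> ((nat \<Rightarrow> real) \<Rightarrow> ennreal) \<Rightarrow> ennreal" where
  "Psi n \<theta> g = (\<integral>\<^sup>+\<omega>. g (sv n \<omega>) \<partial>sample_measure n \<theta>)"

lemma ins_meas_raw[measurable (raw)]:
  "f \<in> measurable M borel \<Longrightarrow> h \<in> measurable M V \<Longrightarrow> (\<lambda>x. ins n (f x) (h x)) \<in> measurable M V"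
  using measurable_compose[OF measurable_Pair ins_meas] by (simp add: case_prod_beta')

lemma cns_meas_raw[measurable (raw)]:
  "f \<in> measurable M borel \<Longrightarrow> h \<in> measurable M V \<Longrightarrow> (\<lambda>x. cns n (f x) (h x)) \<in> measurable M V"
  using measurable_compose[OF measurable_Pair cns_meas] by (simp add: case_prod_beta')

lemma sets_Ex[simp]: "sets (Ex \<theta>) = sets borel"
  by simp

lemma sv_meas_sample: "sv n \<in> measurable (sample_measure n \<theta>) V"
  unfolding sample_measure_def by (rule sv_meas) auto

lemma sv_meas_sample': "{..<n} \<subseteq> I \<Longrightarrow> sv n \<in> measurable (PiM I (\<lambda>_. Ex \<theta>)) V"
  by (rule sv_meas) auto

lemma prob_sample: "0 < \<theta> \<Longrightarrow> prob_space (sample_measure n \<theta>)"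
  unfolding sample_measure_def
  by (intro prob_space_PiM prob_space_exponential_density)

lemma sigma_finite_sample: "0 < \<theta> \<Longrightarrow> sigma_finite_measure (sample_measure n \<theta>)"
  using prob_sample prob_space_imp_sigma_finite by blast

lemma psi_meas:
  assumes "0 < \<theta>" and G: "(\<lambda>(x, v). G x v) \<in> borel_measurable (N \<Otimes>\<^sub>M V)"
  shows "(\<lambda>x. Psi n \<theta> (G x)) \<in> borel_measurable N"
proof -
  interpret sigma_finite_measure "sample_measure n \<theta>"
    using sigma_finite_sample[OF assms(1)] .
  have sv: "sv n \<in> measurable (sample_measure n \<theta>) V" by (rule sv_meas_sample)
  have "(\<lambda>(x, \<omega>). G x (sv n \<omega>)) \<in> borel_measurable (N \<Otimes>\<^sub>M sample_measure n \<theta>)"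
  proof -
    have "(\<lambda>z. (fst z, sv n (snd z))) \<in> measurable (N \<Otimes>\<^sub>M sample_measure n \<theta>) (N \<Otimes>\<^sub>M V)"
      using sv by measurable
    from measurable_compose[OF this G] show ?thesis by (simp add: case_prod_beta')
  qed
  then show ?thesis unfolding Psi_def by (rule borel_measurable_nn_integral)
qed

lemma sv_upd: "sv n (x(n := y)) = sv n x"
proof -
  have "map (\<lambda>i. max 0 ((x(n := y)) i)) [0..<n] = map (\<lambda>i. max 0 (x i)) [0..<n]"
    by (rule map_cong) auto
  then show ?thesis unfolding sv_def by (simp only:)
qed

lemma psi_A:
  assumes th: "0 < \<theta>" and g[measurable]: "g \<in> borel_measurable V"
  shows "Psi (Suc n) \<theta> g = (\<integral>\<^sup>+s. Psi n \<theta> (\<lambda>v. g (ins n s v)) \<partial>Ex \<theta>)"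
proof -
  have ps: "prob_space (Ex \<theta>)" by (rule prob_space_exponential_density[OF th])
  interpret product_sigma_finite "\<lambda>_::nat. Ex \<theta>"
    unfolding product_sigma_finite_def using ps prob_space_imp_sigma_finite by blast
  have I: "{..<Suc n} = insert n {..<n}" by auto
  have m: "(\<lambda>\<omega>. g (sv (Suc n) \<omega>)) \<in> borel_measurable (PiM (insert n {..<n}) (\<lambda>_. Ex \<theta>))"
  proof -
    have "{..<Suc n} \<subseteq> insert n {..<n}" by auto
    from measurable_compose[OF sv_meas_sample'[OF this, of \<theta>] g] show ?thesis by (simp add: comp_def)
  qed
  have "Psi (Suc n) \<theta> g = (\<integral>\<^sup>+ y. (\<integral>\<^sup>+ x. g (sv (Suc n) (x(n := y))) \<partial>(PiM {..<n} (\<lambda>_. Ex \<theta>))) \<partial>Ex \<theta>)"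
    unfolding Psi_def sample_measure_def I
    by (rule product_nn_integral_insert_rev[OF _ _ m]) auto
  also have "\<dots> = (\<integral>\<^sup>+s. Psi n \<theta> (\<lambda>v. g (ins n s v)) \<partial>Ex \<theta>)"
    unfolding Psi_def sample_measure_def
    by (intro nn_integral_cong) (simp add: sv_Suc sv_upd)
  finally show ?thesis .
qed

lemma Psi_0: "Psi 0 \<theta> g = g (\<lambda>_. 0)"
  unfolding Psi_def sample_measure_def
  by (simp add: PiM_empty sv_0)

lemma nn_int_Ex:
  "f \<in> borel_measurable borel \<Longrightarrow>
   (\<integral>\<^sup>+x. f x \<partial>Ex \<theta>) = (\<integral>\<^sup>+x. ennreal (exponential_density \<theta> x) * f x \<partial>lborel)"
  by (subst nn_integral_density) auto



lemma sv_vec: "\<exists>L. sv n \<omega> = vec L \<and> sorted L \<and> length L = n \<and> (\<forall>x\<in>set L. 0 \<le> x)"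
  unfolding sv_def by (intro exI[of _ "sort (map (\<lambda>i. max 0 (\<omega> i)) [0..<n])"]) auto

lemma cns_vec: "length L = n \<Longrightarrow> cns n t (vec L) = vec (t # map (\<lambda>x. x + t) L)"
  by (auto simp: cns_def vec_def fun_eq_iff nth_Cons')

lemma ins_vec: "sorted L \<Longrightarrow> ins (length L) s (vec L) = vec (insort (max 0 s) L)"
  unfolding ins_def by (simp add: vec_insort)

lemma insort_shift: fixes x c :: real shows "insort (x + c) (map (\<lambda>y. y + c) L) = map (\<lambda>y. y + c) (insort x L)"
  by (induction L) auto

lemma key1:
  assumes "0 \<le> s" "s \<le> t"
  shows "ins (Suc n) s (cns n t (sv n \<omega>)) = cns (Suc n) s (cns n (t - s) (sv n \<omega>))"
proof -
  obtain L where L: "sv n \<omega> = vec L" "sorted L" "length L = n" "\<forall>x\<in>set L. 0 \<le> x"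
    using sv_vec by blast
  let ?L' = "t # map (\<lambda>x. x + t) L"
  have srt: "sorted ?L'" using L assms by (auto simp: sorted_map intro: sorted_wrt_mono_rel)
  have "ins (Suc n) s (cns n t (sv n \<omega>)) = ins (length ?L') s (vec ?L')"
    using L by (simp add: cns_vec)
  also have "\<dots> = vec (insort (max 0 s) ?L')" by (rule ins_vec[OF srt])
  also have "\<dots> = vec (s # ?L')" using assms by simp
  also have "\<dots> = cns (Suc n) s (cns n (t - s) (sv n \<omega>))"
    using L by (simp add: cns_vec comp_def)
  finally show ?thesis .
qed

lemma key2:
  assumes "0 \<le> t" "t < s"
  shows "ins (Suc n) s (cns n t (sv n \<omega>)) = cns (Suc n) t (ins n (s - t) (sv n \<omega>))"
proof -
  obtain L where L: "sv n \<omega> = vec L" "sorted L" "length L = n" "\<forall>x\<in>set L. 0 \<le> x"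
    using sv_vec by blast
  let ?L' = "t # map (\<lambda>x. x + t) L"
  have srt: "sorted ?L'" using L assms by (auto simp: sorted_map intro: sorted_wrt_mono_rel)
  have "ins (Suc n) s (cns n t (sv n \<omega>)) = ins (length ?L') s (vec ?L')"
    using L by (simp add: cns_vec)
  also have "\<dots> = vec (insort (max 0 s) ?L')" by (rule ins_vec[OF srt])
  also have "\<dots> = vec (t # insort s (map (\<lambda>x. x + t) L))" using assms by simp
  also have "insort s (map (\<lambda>x. x + t) L) = map (\<lambda>x. x + t) (insort (s - t) L)"
    using insort_shift[of "s - t" t L] by simp
  also have "vec (t # map (\<lambda>x. x + t) (insort (s - t) L)) = cns (Suc n) t (ins n (s - t) (sv n \<omega>))"
  proof -
    have "ins n (s - t) (vec L) = vec (insort (s-t) L)"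
      using ins_vec[OF L(2), of "s-t"] L(3) assms by simp
    moreover have "length (insort (s-t) L) = Suc n" using L(3) by simp
    ultimately show ?thesis using L(1) by (simp add: cns_vec)
  qed
  finally show ?thesis .
qed



lemma shift_int:
  fixes f :: "real \<Rightarrow> ennreal"
  assumes "f \<in> borel_measurable borel"
  shows "(\<integral>\<^sup>+t. f t \<partial>lborel) = (\<integral>\<^sup>+u. f (s + u) \<partial>lborel)"
  using nn_integral_real_affine[OF assms, of 1 s] by simp

lemma meas2_raw:
  assumes "(\<lambda>z. F (fst z) (snd z)) \<in> borel_measurable (borel \<Otimes>\<^sub>M borel)"
    and "f \<in> borel_measurable M" "h \<in> borel_measurable M"
  shows "(\<lambda>x. F (f x) (h x)) \<in> borel_measurable M"
  using measurable_compose[OF measurable_Pair[OF assms(2,3)] assms(1)] by simp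

lemma ed_shift:
  assumes "0 \<le> s" "0 < l"
  shows "ennreal (exponential_density l (s + u)) * indicator {0..} u =
         ennreal (exp (- l * s)) * ennreal (exponential_density l u)"
proof (cases "u < 0")
  case True then show ?thesis by (simp add: exponential_density_def)
next
  case False
  then have "exponential_density l (s + u) = exp (- l * s) * exponential_density l u"
    using assms by (simp add: exponential_density_def exp_add[symmetric] algebra_simps)
  then show ?thesis using False assms
    by (simp add: ennreal_mult'[symmetric] indicator_def)
qed



lemma psi_B:
  assumes th: "0 < \<theta>" and g: "g \<in> borel_measurable V"
  shows "Psi (Suc n) \<theta> g = (\<integral>\<^sup>+t. Psi n \<theta> (\<lambda>v. g (cns n t v)) \<partial>Ex (real (Suc n) * \<theta>))"
  using g
proof (induction n arbitrary: g)
  case 0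
  note [measurable] = "0.prems"
  have "Psi (Suc 0) \<theta> g = (\<integral>\<^sup>+s. g (ins 0 s (\<lambda>_. 0)) \<partial>Ex \<theta>)"
    by (simp add: psi_A[OF th "0.prems"] Psi_0)
  also have "\<dots> = (\<integral>\<^sup>+s. ennreal (exponential_density \<theta> s) * g (ins 0 s (\<lambda>_. 0)) \<partial>lborel)"
    by (rule nn_int_Ex) measurable
  also have "\<dots> = (\<integral>\<^sup>+s. ennreal (exponential_density \<theta> s) * g (cns 0 s (\<lambda>_. 0)) \<partial>lborel)"
  proof (rule nn_integral_cong)
    fix s :: real
    show "ennreal (exponential_density \<theta> s) * g (ins 0 s (\<lambda>_. 0)) =
          ennreal (exponential_density \<theta> s) * g (cns 0 s (\<lambda>_. 0))"
    proof (cases "s < 0")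
      case True then show ?thesis by (simp add: exponential_density_def)
    next
      case False
      then have "ins 0 s (\<lambda>_. 0) = cns 0 s (\<lambda>_. 0)"
        by (auto simp: ins_def insF_def cns_def fun_eq_iff)
      then show ?thesis by simp
    qed
  qed
  also have "\<dots> = (\<integral>\<^sup>+t. g (cns 0 t (\<lambda>_. 0)) \<partial>Ex \<theta>)"
    by (rule nn_int_Ex[symmetric]) measurable
  also have "\<dots> = (\<integral>\<^sup>+t. Psi 0 \<theta> (\<lambda>v. g (cns 0 t v)) \<partial>Ex (real (Suc 0) * \<theta>))"
    by (simp add: Psi_0)
  finally show ?case .
next
  case (Suc n)
  note g[measurable] = Suc.prems
  note IH = Suc.IH
  define e1 where "e1 = (\<lambda>x. ennreal (exponential_density \<theta> x))"
  define ek where "ek = (\<lambda>x. ennreal (exponential_density (real (Suc n) * \<theta>) x))"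
  define eK where "eK = (\<lambda>x. ennreal (exponential_density (real (Suc (Suc n)) * \<theta>) x))"
  have [measurable]: "e1 \<in> borel_measurable borel" "ek \<in> borel_measurable borel" "eK \<in> borel_measurable borel"
    unfolding e1_def ek_def eK_def by measurable
  define F1 where "F1 = (\<lambda>s u. Psi n \<theta> (\<lambda>v. g (cns (Suc n) s (cns n u v))))"
  define F2 where "F2 = (\<lambda>t u. Psi n \<theta> (\<lambda>v. g (cns (Suc n) t (ins n u v))))"
  define K where "K = (\<lambda>s t. Psi n \<theta> (\<lambda>v. g (ins (Suc n) s (cns n t v))))"
  define H where "H = (\<lambda>t. Psi (Suc n) \<theta> (\<lambda>w. g (cns (Suc n) t w)))"
  have mF1: "(\<lambda>z. F1 (fst z) (snd z)) \<in> borel_measurable (borel \<Otimes>\<^sub>M borel)"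
    unfolding F1_def by (rule psi_meas[OF th, where G="\<lambda>z v. g (cns (Suc n) (fst z) (cns n (snd z) v))"]) measurable
  have mF2: "(\<lambda>z. F2 (fst z) (snd z)) \<in> borel_measurable (borel \<Otimes>\<^sub>M borel)"
    unfolding F2_def by (rule psi_meas[OF th, where G="\<lambda>z v. g (cns (Suc n) (fst z) (ins n (snd z) v))"]) measurable
  have mK: "(\<lambda>z. K (fst z) (snd z)) \<in> borel_measurable (borel \<Otimes>\<^sub>M borel)"
    unfolding K_def by (rule psi_meas[OF th, where G="\<lambda>z v. g (ins (Suc n) (fst z) (cns n (snd z) v))"]) measurable
  have mH[measurable]: "H \<in> borel_measurable borel"
    unfolding H_def by (rule psi_meas[OF th, where G="\<lambda>z v. g (cns (Suc n) z v)"]) measurable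
  note [measurable] = meas2_raw[OF mF1] meas2_raw[OF mF2] meas2_raw[OF mK]
  have H1: "H s = (\<integral>\<^sup>+u. ek u * F1 s u \<partial>lborel)" for s
  proof -
    have "H s = (\<integral>\<^sup>+t. F1 s t \<partial>Ex (real (Suc n) * \<theta>))"
      unfolding H_def F1_def by (rule IH) measurable
    also have "\<dots> = (\<integral>\<^sup>+u. ek u * F1 s u \<partial>lborel)"
      unfolding ek_def by (rule nn_int_Ex) measurable
    finally show ?thesis .
  qed
  have H2: "H t = (\<integral>\<^sup>+u. e1 u * F2 t u \<partial>lborel)" for t
  proof -
    have "H t = (\<integral>\<^sup>+u. F2 t u \<partial>Ex \<theta>)"
      unfolding H_def F2_def by (rule psi_A[OF th]) measurable
    also have "\<dots> = (\<integral>\<^sup>+u. e1 u * F2 t u \<partial>lborel)"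
      unfolding e1_def by (rule nn_int_Ex) measurable
    finally show ?thesis .
  qed
  have "Psi (Suc (Suc n)) \<theta> g = (\<integral>\<^sup>+s. Psi (Suc n) \<theta> (\<lambda>w. g (ins (Suc n) s w)) \<partial>Ex \<theta>)"
    by (rule psi_A[OF th g])
  also have "\<dots> = (\<integral>\<^sup>+s. (\<integral>\<^sup>+t. K s t \<partial>Ex (real (Suc n) * \<theta>)) \<partial>Ex \<theta>)"
    unfolding K_def by (intro nn_integral_cong IH) measurable
  also have "\<dots> = (\<integral>\<^sup>+s. e1 s * (\<integral>\<^sup>+t. ek t * K s t \<partial>lborel) \<partial>lborel)"
  proof -
    have mi: "(\<lambda>s. \<integral>\<^sup>+t. ek t * K s t \<partial>lborel) \<in> borel_measurable borel"
      by measurable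
    have "(\<integral>\<^sup>+s. (\<integral>\<^sup>+t. K s t \<partial>Ex (real (Suc n) * \<theta>)) \<partial>Ex \<theta>) =
          (\<integral>\<^sup>+s. (\<integral>\<^sup>+t. ek t * K s t \<partial>lborel) \<partial>Ex \<theta>)"
      unfolding ek_def by (intro nn_integral_cong nn_int_Ex) measurable
    also have "\<dots> = (\<integral>\<^sup>+s. e1 s * (\<integral>\<^sup>+t. ek t * K s t \<partial>lborel) \<partial>lborel)"
      unfolding e1_def by (rule nn_int_Ex[OF mi])
    finally show ?thesis .
  qed
  also have "\<dots> = (\<integral>\<^sup>+s. e1 s * ((\<integral>\<^sup>+t. ek t * (if s \<le> t then F1 s (t - s) else 0) \<partial>lborel) +
                        (\<integral>\<^sup>+t. ek t * (if t < s then F2 t (s - t) else 0) \<partial>lborel)) \<partial>lborel)"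
  proof (rule nn_integral_cong)
    fix s :: real
    show "e1 s * (\<integral>\<^sup>+t. ek t * K s t \<partial>lborel) = e1 s * ((\<integral>\<^sup>+t. ek t * (if s \<le> t then F1 s (t - s) else 0) \<partial>lborel) +
                        (\<integral>\<^sup>+t. ek t * (if t < s then F2 t (s - t) else 0) \<partial>lborel))"
    proof (cases "s < 0")
      case True then show ?thesis by (simp add: e1_def exponential_density_def)
    next
      case False
      have "(\<integral>\<^sup>+t. ek t * K s t \<partial>lborel) =
            (\<integral>\<^sup>+t. ek t * (if s \<le> t then F1 s (t - s) else 0) + ek t * (if t < s then F2 t (s - t) else 0) \<partial>lborel)"
      proof (rule nn_integral_cong)
        fix t :: real
        show "ek t * K s t = ek t * (if s \<le> t then F1 s (t - s) else 0) + ek t * (if t < s then F2 t (s - t) else 0)"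
        proof (cases "t < 0")
          case True then show ?thesis by (simp add: ek_def exponential_density_def)
        next
          case t0: False
          show ?thesis
          proof (cases "s \<le> t")
            case True
            have "K s t = F1 s (t - s)"
              unfolding K_def F1_def Psi_def
              using key1[of s t n] False True by (intro nn_integral_cong) simp
            then show ?thesis using True by simp
          next
            case lt: False
            have "K s t = F2 t (s - t)"
              unfolding K_def F2_def Psi_def
              using key2[of t s n] t0 lt by (intro nn_integral_cong) simp
            then show ?thesis using lt by simp
          qed
        qed
      qed
      also have "\<dots> = (\<integral>\<^sup>+t. ek t * (if s \<le> t then F1 s (t - s) else 0) \<partial>lborel) +
                        (\<integral>\<^sup>+t. ek t * (if t < s then F2 t (s - t) else 0) \<partial>lborel)"
        by (rule nn_integral_add) measurable
      finally show ?thesis by simp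
    qed
  qed
  also have "\<dots> = (\<integral>\<^sup>+s. e1 s * (\<integral>\<^sup>+t. ek t * (if s \<le> t then F1 s (t - s) else 0) \<partial>lborel) \<partial>lborel) +
                  (\<integral>\<^sup>+s. e1 s * (\<integral>\<^sup>+t. ek t * (if t < s then F2 t (s - t) else 0) \<partial>lborel) \<partial>lborel)"
    unfolding distrib_left by (rule nn_integral_add) measurable
  also have "(\<integral>\<^sup>+s. e1 s * (\<integral>\<^sup>+t. ek t * (if s \<le> t then F1 s (t - s) else 0) \<partial>lborel) \<partial>lborel) =
             (\<integral>\<^sup>+s. e1 s * ennreal (exp (- (real (Suc n) * \<theta>) * s)) * H s \<partial>lborel)"
  proof (rule nn_integral_cong)
    fix s :: real
    show "e1 s * (\<integral>\<^sup>+t. ek t * (if s \<le> t then F1 s (t - s) else 0) \<partial>lborel) =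
          e1 s * ennreal (exp (- (real (Suc n) * \<theta>) * s)) * H s"
    proof (cases "s < 0")
      case True then show ?thesis by (simp add: e1_def exponential_density_def)
    next
      case False
      have "(\<integral>\<^sup>+t. ek t * (if s \<le> t then F1 s (t - s) else 0) \<partial>lborel) =
            (\<integral>\<^sup>+u. ek (s + u) * (if s \<le> s + u then F1 s (s + u - s) else 0) \<partial>lborel)"
        by (rule shift_int) measurable
      also have "\<dots> = (\<integral>\<^sup>+u. ennreal (exp (- (real (Suc n) * \<theta>) * s)) * (ek u * F1 s u) \<partial>lborel)"
      proof (rule nn_integral_cong)
        fix u :: real
        have "ek (s + u) * indicator {0..} u = ennreal (exp (- (real (Suc n) * \<theta>) * s)) * ek u"
          unfolding ek_def by (rule ed_shift) (use False th in auto)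
        then show "ek (s + u) * (if s \<le> s + u then F1 s (s + u - s) else 0) =
                   ennreal (exp (- (real (Suc n) * \<theta>) * s)) * (ek u * F1 s u)"
          by (cases "0 \<le> u") (auto simp: mult.assoc[symmetric] ek_def exponential_density_def)
      qed
      also have "\<dots> = ennreal (exp (- (real (Suc n) * \<theta>) * s)) * H s"
        by (subst nn_integral_cmult) (measurable, simp add: H1)
      finally show ?thesis by (simp add: mult.assoc)
    qed
  qed
  also have "(\<integral>\<^sup>+s. e1 s * (\<integral>\<^sup>+t. ek t * (if t < s then F2 t (s - t) else 0) \<partial>lborel) \<partial>lborel) =
             (\<integral>\<^sup>+s. (\<integral>\<^sup>+t. e1 s * (ek t * (if t < s then F2 t (s - t) else 0)) \<partial>lborel) \<partial>lborel)"
    by (intro nn_integral_cong nn_integral_cmult[symmetric]) measurable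
  also have "\<dots> = (\<integral>\<^sup>+t. (\<integral>\<^sup>+s. e1 s * (ek t * (if t < s then F2 t (s - t) else 0)) \<partial>lborel) \<partial>lborel)"
    by (subst lborel_pair.Fubini') (simp_all add: case_prod_unfold cong: measurable_cong_sets)
  also have "\<dots> = (\<integral>\<^sup>+t. ek t * ennreal (exp (- \<theta> * t)) * H t \<partial>lborel)"
  proof (rule nn_integral_cong)
    fix t :: real
    have "(\<integral>\<^sup>+s. e1 s * (ek t * (if t < s then F2 t (s - t) else 0)) \<partial>lborel) =
          ek t * (\<integral>\<^sup>+s. e1 s * (if t < s then F2 t (s - t) else 0) \<partial>lborel)"
      by (subst nn_integral_cmult[symmetric]) (measurable, simp add: mult.left_commute)
    also have "\<dots> = ek t * (ennreal (exp (- \<theta> * t)) * H t)"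
    proof (cases "t < 0")
      case True then show ?thesis by (simp add: ek_def exponential_density_def)
    next
      case False
      have "(\<integral>\<^sup>+s. e1 s * (if t < s then F2 t (s - t) else 0) \<partial>lborel) =
            (\<integral>\<^sup>+u. e1 (t + u) * (if t < t + u then F2 t (t + u - t) else 0) \<partial>lborel)"
        by (rule shift_int) measurable
      also have "\<dots> = (\<integral>\<^sup>+u. ennreal (exp (- \<theta> * t)) * (e1 u * F2 t u) \<partial>lborel)"
      proof (rule nn_integral_cong_AE)
        show "AE u in lborel. e1 (t + u) * (if t < t + u then F2 t (t + u - t) else 0) =
                ennreal (exp (- \<theta> * t)) * (e1 u * F2 t u)"
        proof (rule eventually_mono[OF AE_lborel_singleton[of 0]])
          fix u :: real assume u0: "u \<noteq> 0"
          have "e1 (t + u) * indicator {0..} u = ennreal (exp (- \<theta> * t)) * e1 u"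
            unfolding e1_def by (rule ed_shift) (use False th in auto)
          then show "e1 (t + u) * (if t < t + u then F2 t (t + u - t) else 0) =
                ennreal (exp (- \<theta> * t)) * (e1 u * F2 t u)"
            using u0 by (cases "0 < u") (auto simp: mult.assoc[symmetric] e1_def exponential_density_def)
        qed
      qed
      also have "\<dots> = ennreal (exp (- \<theta> * t)) * H t"
        by (subst nn_integral_cmult) (measurable, simp add: H2)
      finally show ?thesis by simp
    qed
    finally show "(\<integral>\<^sup>+s. e1 s * (ek t * (if t < s then F2 t (s - t) else 0)) \<partial>lborel) =
                  ek t * ennreal (exp (- \<theta> * t)) * H t" by (simp add: mult.assoc)
  qed
  also have "(\<integral>\<^sup>+s. e1 s * ennreal (exp (- (real (Suc n) * \<theta>) * s)) * H s \<partial>lborel) +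
             (\<integral>\<^sup>+t. ek t * ennreal (exp (- \<theta> * t)) * H t \<partial>lborel) =
             (\<integral>\<^sup>+s. e1 s * ennreal (exp (- (real (Suc n) * \<theta>) * s)) * H s +
                    ek s * ennreal (exp (- \<theta> * s)) * H s \<partial>lborel)"
    by (rule nn_integral_add[symmetric]) measurable
  also have "\<dots> = (\<integral>\<^sup>+s. eK s * H s \<partial>lborel)"
  proof (rule nn_integral_cong)
    fix s :: real
    have "e1 s * ennreal (exp (- (real (Suc n) * \<theta>) * s)) + ek s * ennreal (exp (- \<theta> * s)) = eK s"
    proof (cases "s < 0")
      case True then show ?thesis by (simp add: e1_def ek_def eK_def exponential_density_def)
    next
      case False
      have "exponential_density \<theta> s * exp (- (real (Suc n) * \<theta>) * s) +
            exponential_density (real (Suc n) * \<theta>) s * exp (- \<theta> * s) =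
            exponential_density (real (Suc (Suc n)) * \<theta>) s"
      proof -
        have x1: "exp (- s * \<theta>) * exp (- (real (Suc n) * \<theta>) * s) = exp (- s * (real (Suc (Suc n)) * \<theta>))"
          by (subst exp_add[symmetric], rule arg_cong[where f=exp]) (simp add: algebra_simps)
        have x2: "exp (- s * (real (Suc n) * \<theta>)) * exp (- \<theta> * s) = exp (- s * (real (Suc (Suc n)) * \<theta>))"
          by (subst exp_add[symmetric], rule arg_cong[where f=exp]) (simp add: algebra_simps)
        have "exponential_density \<theta> s * exp (- (real (Suc n) * \<theta>) * s) +
            exponential_density (real (Suc n) * \<theta>) s * exp (- \<theta> * s) =
            \<theta> * (exp (- s * \<theta>) * exp (- (real (Suc n) * \<theta>) * s)) +
            real (Suc n) * \<theta> * (exp (- s * (real (Suc n) * \<theta>)) * exp (- \<theta> * s))"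
          using False by (simp add: exponential_density_def)
        also have "\<dots> = real (Suc (Suc n)) * \<theta> * exp (- s * (real (Suc (Suc n)) * \<theta>))"
          unfolding x1 x2 by (simp add: algebra_simps)
        finally show ?thesis using False by (simp add: exponential_density_def)
      qed
      moreover have "0 \<le> exponential_density \<theta> s" "0 \<le> exponential_density (real (Suc n) * \<theta>) s"
        using th by (simp_all add: exponential_density_nonneg)
      ultimately show ?thesis unfolding e1_def ek_def eK_def
        by (simp add: ennreal_mult'[symmetric] ennreal_plus[symmetric] del: ennreal_plus)
    qed
    then show "e1 s * ennreal (exp (- (real (Suc n) * \<theta>) * s)) * H s +
                    ek s * ennreal (exp (- \<theta> * s)) * H s = eK s * H s"
      by (metis distrib_right)
  qed
  also have "\<dots> = (\<integral>\<^sup>+t. Psi (Suc n) \<theta> (\<lambda>v. g (cns (Suc n) t v)) \<partial>Ex (real (Suc (Suc n)) * \<theta>))"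
    unfolding eK_def H_def by (rule nn_int_Ex[symmetric]) (fold H_def, measurable)
  finally show ?case .
qed



abbreviation erl :: "nat \<Rightarrow> real \<Rightarrow> real \<Rightarrow> ennreal" where
  "erl k l x \<equiv> ennreal (erlang_density k l x)"

lemma Psi_const: "0 < \<theta> \<Longrightarrow> Psi n \<theta> (\<lambda>_. c) = c"
  unfolding Psi_def using prob_space.emeasure_space_1[OF prob_sample] by simp

lemma scale_lemma:
  fixes N :: real
  assumes N: "0 < N" and th: "0 < \<theta>" and Q[measurable]: "Q \<in> borel_measurable borel"
  shows "(\<integral>\<^sup>+t. Q (N * t) \<partial>Ex (N * \<theta>)) = (\<integral>\<^sup>+x. Q x \<partial>Ex \<theta>)"
proof -
  have "(\<integral>\<^sup>+x. Q x \<partial>Ex \<theta>) = (\<integral>\<^sup>+x. ennreal (exponential_density \<theta> x) * Q x \<partial>lborel)"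
    by (rule nn_int_Ex) measurable
  also have "\<dots> = ennreal \<bar>N\<bar> * (\<integral>\<^sup>+t. ennreal (exponential_density \<theta> (0 + N * t)) * Q (0 + N * t) \<partial>lborel)"
    by (rule nn_integral_real_affine) (use N in auto)
  also have "\<dots> = (\<integral>\<^sup>+t. ennreal N * (ennreal (exponential_density \<theta> (N * t)) * Q (N * t)) \<partial>lborel)"
  proof -
    have m: "(\<lambda>t. ennreal (exponential_density \<theta> (N * t)) * Q (N * t)) \<in> borel_measurable lborel"
      by measurable
    show ?thesis using N by (subst nn_integral_cmult[OF m]) simp
  qed
  also have "\<dots> = (\<integral>\<^sup>+t. ennreal (exponential_density (N * \<theta>) t) * Q (N * t) \<partial>lborel)"
  proof (rule nn_integral_cong)
    fix t :: real
    have "N * exponential_density \<theta> (N * t) = exponential_density (N * \<theta>) t"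
      using N by (auto simp: exponential_density_def zero_le_mult_iff mult_less_0_iff algebra_simps)
    then show "ennreal N * (ennreal (exponential_density \<theta> (N * t)) * Q (N * t)) =
               ennreal (exponential_density (N * \<theta>) t) * Q (N * t)"
      using N th by (simp add: mult.assoc[symmetric] ennreal_mult'[symmetric] exponential_density_nonneg)
  qed
  also have "\<dots> = (\<integral>\<^sup>+t. Q (N * t) \<partial>Ex (N * \<theta>))"
    by (rule nn_int_Ex[symmetric]) measurable
  finally show ?thesis ..
qed

lemma conv_lemma:
  assumes th: "0 < \<theta>" and Q[measurable]: "Q \<in> borel_measurable borel"
  shows "(\<integral>\<^sup>+u. (\<integral>\<^sup>+x. erl k \<theta> x * Q (u + x) \<partial>lborel) \<partial>Ex \<theta>) =
         (\<integral>\<^sup>+z. erl (Suc k) \<theta> z * Q z \<partial>lborel)"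
proof -
  have "(\<integral>\<^sup>+u. (\<integral>\<^sup>+x. erl k \<theta> x * Q (u + x) \<partial>lborel) \<partial>Ex \<theta>) =
        (\<integral>\<^sup>+u. erl 0 \<theta> u * (\<integral>\<^sup>+x. erl k \<theta> x * Q (u + x) \<partial>lborel) \<partial>lborel)"
    by (rule nn_int_Ex) measurable
  also have "\<dots> = (\<integral>\<^sup>+u. erl 0 \<theta> u * (\<integral>\<^sup>+z. erl k \<theta> (z - u) * Q z \<partial>lborel) \<partial>lborel)"
  proof (rule nn_integral_cong)
    fix u :: real
    have "(\<integral>\<^sup>+x. erl k \<theta> x * Q (u + x) \<partial>lborel) = (\<integral>\<^sup>+z. erl k \<theta> (-u + z) * Q (u + (-u + z)) \<partial>lborel)"
      by (rule shift_int) measurable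
    then show "erl 0 \<theta> u * (\<integral>\<^sup>+x. erl k \<theta> x * Q (u + x) \<partial>lborel) = erl 0 \<theta> u * (\<integral>\<^sup>+z. erl k \<theta> (z - u) * Q z \<partial>lborel)"
      by simp
  qed
  also have "\<dots> = (\<integral>\<^sup>+u. (\<integral>\<^sup>+z. erl 0 \<theta> u * (erl k \<theta> (z - u) * Q z) \<partial>lborel) \<partial>lborel)"
    by (intro nn_integral_cong nn_integral_cmult[symmetric]) measurable
  also have "\<dots> = (\<integral>\<^sup>+z. (\<integral>\<^sup>+u. erl 0 \<theta> u * (erl k \<theta> (z - u) * Q z) \<partial>lborel) \<partial>lborel)"
    by (subst lborel_pair.Fubini') (simp_all add: case_prod_unfold cong: measurable_cong_sets)
  also have "\<dots> = (\<integral>\<^sup>+z. (\<integral>\<^sup>+u. erl k \<theta> (z - u) * erl 0 \<theta> u \<partial>lborel) * Q z \<partial>lborel)"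
    by (intro nn_integral_cong, subst nn_integral_multc[symmetric]) (measurable, simp add: ac_simps)
  also have "\<dots> = (\<integral>\<^sup>+z. erl (Suc k) \<theta> z * Q z \<partial>lborel)"
    using fun_cong[OF convolution_erlang_density[OF th, of k 0]] by simp
  finally show ?thesis .
qed



definition Xv :: "nat \<Rightarrow> nat \<Rightarrow> (nat \<Rightarrow> real) \<Rightarrow> real" where
  "Xv n m w = (\<Sum>i<m. w i) + real (n - m) * w (m - 1)"

definition Yv :: "nat \<Rightarrow> (nat \<Rightarrow> real) \<Rightarrow> real \<times> real" where
  "Yv m w = (w m - w (m - 1), w (Suc m) - w m)"

definition Qf :: "nat \<Rightarrow> nat \<Rightarrow> real \<Rightarrow> (real \<times> real \<Rightarrow> ennreal) \<Rightarrow> ennreal" where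
  "Qf n m \<theta> k = (\<integral>\<^sup>+y1. ennreal (exponential_density (real (n - m) * \<theta>) y1) *
      (\<integral>\<^sup>+y2. ennreal (exponential_density (real (n - m - 1) * \<theta>) y2) * k (y1, y2) \<partial>lborel) \<partial>lborel)"

lemma Qf_meas[measurable]:
  fixes h :: "real \<times> real \<times> real \<Rightarrow> ennreal" and f :: "'a \<Rightarrow> real"
  assumes [measurable]: "h \<in> borel_measurable borel" "f \<in> borel_measurable M"
  shows "(\<lambda>x. Qf n m \<theta> (\<lambda>y. h (f x, y))) \<in> borel_measurable M"
  unfolding Qf_def by measurable

lemma Xv_meas[measurable]: "Xv n m \<in> borel_measurable V"
  unfolding Xv_def by measurable

lemma Yv_meas[measurable]: "Yv m \<in> borel_measurable V"
  unfolding Yv_def by measurable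

lemma Xv_cns:
  assumes "1 \<le> m" "m \<le> n"
  shows "Xv (Suc n) (Suc m) (cns n t v) = real (Suc n) * t + Xv n m v"
proof -
  have "(\<Sum>i<Suc m. cns n t v i) = t + (\<Sum>i<m. cns n t v (Suc i))"
    by (subst sum.lessThan_Suc_shift) (simp add: cns_def)
  also have "(\<Sum>i<m. cns n t v (Suc i)) = (\<Sum>i<m. v i + t)"
    using assms by (intro sum.cong) (auto simp: cns_def)
  also have "\<dots> = (\<Sum>i<m. v i) + real m * t" by (simp add: sum.distrib)
  finally have s: "(\<Sum>i<Suc m. cns n t v i) = t + ((\<Sum>i<m. v i) + real m * t)" .
  have c: "cns n t v m = v (m - 1) + t" using assms by (simp add: cns_def)
  show ?thesis
    unfolding Xv_def s using assms c by (simp add: of_nat_diff algebra_simps)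
qed

lemma Yv_cns:
  assumes "1 \<le> m" "m + 2 \<le> n"
  shows "Yv (Suc m) (cns n t v) = Yv m v"
  using assms by (simp add: Yv_def cns_def)



lemma lemC:
  fixes h :: "real \<times> real \<times> real \<Rightarrow> ennreal"
  assumes th: "0 < \<theta>" and m: "1 \<le> m" and n: "m + 2 \<le> n"
    and h: "h \<in> borel_measurable borel"
  shows "Psi n \<theta> (\<lambda>w. h (Xv n m w, Yv m w)) =
         (\<integral>\<^sup>+x. erl (m - 1) \<theta> x * Qf n m \<theta> (\<lambda>y. h (x, y)) \<partial>lborel)"
  using m n h
proof (induction m arbitrary: n h rule: nat_induct_at_least)
  case base
  note [measurable] = base.prems(2)
  define n3 where "n3 = n - 3"
  have n3: "n = Suc (Suc (Suc n3))" using base.prems(1) unfolding n3_def by arith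
  define G where "G = (\<lambda>w. h (Xv n 1 w, Yv 1 w))"
  have [measurable]: "G \<in> borel_measurable V" unfolding G_def by measurable
  have Gc: "G (cns (Suc (Suc n3)) t (cns (Suc n3) u (cns n3 r q))) = h (real n * t, u, r)" for t u r q
    unfolding G_def Xv_def Yv_def n3 by (simp add: cns_def algebra_simps)
  have "Psi n \<theta> G = (\<integral>\<^sup>+t. Psi (Suc (Suc n3)) \<theta> (\<lambda>v. G (cns (Suc (Suc n3)) t v)) \<partial>Ex (real n * \<theta>))"
    unfolding n3 by (rule psi_B[OF th]) measurable
  also have "\<dots> = (\<integral>\<^sup>+t. (\<integral>\<^sup>+u. Psi (Suc n3) \<theta> (\<lambda>z. G (cns (Suc (Suc n3)) t (cns (Suc n3) u z)))
                      \<partial>Ex (real (Suc (Suc n3)) * \<theta>)) \<partial>Ex (real n * \<theta>))"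
    by (intro nn_integral_cong psi_B[OF th]) measurable
  also have "\<dots> = (\<integral>\<^sup>+t. (\<integral>\<^sup>+u. (\<integral>\<^sup>+r. Psi n3 \<theta> (\<lambda>q. G (cns (Suc (Suc n3)) t (cns (Suc n3) u (cns n3 r q))))
                      \<partial>Ex (real (Suc n3) * \<theta>)) \<partial>Ex (real (Suc (Suc n3)) * \<theta>)) \<partial>Ex (real n * \<theta>))"
    by (intro nn_integral_cong psi_B[OF th]) measurable
  also have "\<dots> = (\<integral>\<^sup>+t. (\<integral>\<^sup>+u. (\<integral>\<^sup>+r. h (real n * t, u, r)
                      \<partial>Ex (real (Suc n3) * \<theta>)) \<partial>Ex (real (Suc (Suc n3)) * \<theta>)) \<partial>Ex (real n * \<theta>))"
    by (simp add: Gc Psi_const[OF th])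
  also have "\<dots> = (\<integral>\<^sup>+t. Qf n 1 \<theta> (\<lambda>y. h (real n * t, y)) \<partial>Ex (real n * \<theta>))"
  proof (rule nn_integral_cong)
    fix t :: real
    have "(\<integral>\<^sup>+u. (\<integral>\<^sup>+r. h (real n * t, u, r) \<partial>Ex (real (Suc n3) * \<theta>)) \<partial>Ex (real (Suc (Suc n3)) * \<theta>)) =
          (\<integral>\<^sup>+u. (\<integral>\<^sup>+r. ennreal (exponential_density (real (Suc n3) * \<theta>) r) * h (real n * t, u, r) \<partial>lborel) \<partial>Ex (real (Suc (Suc n3)) * \<theta>))"
      by (intro nn_integral_cong nn_int_Ex) measurable
    also have "\<dots> = (\<integral>\<^sup>+u. ennreal (exponential_density (real (Suc (Suc n3)) * \<theta>) u) *
             (\<integral>\<^sup>+r. ennreal (exponential_density (real (Suc n3) * \<theta>) r) * h (real n * t, u, r) \<partial>lborel) \<partial>lborel)"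
      by (rule nn_int_Ex) measurable
    finally show "(\<integral>\<^sup>+u. (\<integral>\<^sup>+r. h (real n * t, u, r) \<partial>Ex (real (Suc n3) * \<theta>)) \<partial>Ex (real (Suc (Suc n3)) * \<theta>)) =
          Qf n 1 \<theta> (\<lambda>y. h (real n * t, y))"
      unfolding Qf_def n3 by (simp add: numeral_eq_Suc)
  qed
  also have "\<dots> = (\<integral>\<^sup>+x. Qf n 1 \<theta> (\<lambda>y. h (x, y)) \<partial>Ex \<theta>)"
    by (rule scale_lemma[where Q="\<lambda>x. Qf n 1 \<theta> (\<lambda>y. h (x, y))"]) (use n3 th in auto)
  also have "\<dots> = (\<integral>\<^sup>+x. erl (1 - 1) \<theta> x * Qf n 1 \<theta> (\<lambda>y. h (x, y)) \<partial>lborel)"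
    by (simp add: nn_int_Ex)
  finally show ?case unfolding G_def .
next
  case (Suc m)
  note [measurable] = Suc.prems(2)
  define n' where "n' = n - 1"
  have n': "n = Suc n'" using Suc.prems(1) unfolding n'_def by arith
  have mn: "m + 2 \<le> n'" using Suc.prems(1) n' by simp
  define N where "N = real (Suc n')"
  have N: "0 < N" unfolding N_def by simp
  define Q where "Q = (\<lambda>z. Qf n' m \<theta> (\<lambda>y. h (z, y)))"
  have [measurable]: "Q \<in> borel_measurable borel" unfolding Q_def by measurable
  have "Psi n \<theta> (\<lambda>w. h (Xv n (Suc m) w, Yv (Suc m) w)) =
        (\<integral>\<^sup>+t. Psi n' \<theta> (\<lambda>v. h (Xv n (Suc m) (cns n' t v), Yv (Suc m) (cns n' t v))) \<partial>Ex (N * \<theta>))"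
    unfolding n' N_def by (rule psi_B[OF th]) measurable
  also have "\<dots> = (\<integral>\<^sup>+t. Psi n' \<theta> (\<lambda>v. h (N * t + Xv n' m v, Yv m v)) \<partial>Ex (N * \<theta>))"
    unfolding n' N_def using Suc.hyps mn
    by (simp add: Xv_cns Yv_cns)
  also have "\<dots> = (\<integral>\<^sup>+t. (\<integral>\<^sup>+x. erl (m - 1) \<theta> x * Q (N * t + x) \<partial>lborel) \<partial>Ex (N * \<theta>))"
  proof (rule nn_integral_cong)
    fix t :: real
    have "Psi n' \<theta> (\<lambda>v. (\<lambda>z. h (N * t + fst z, snd z)) (Xv n' m v, Yv m v)) =
          (\<integral>\<^sup>+x. erl (m - 1) \<theta> x * Qf n' m \<theta> (\<lambda>y. (\<lambda>z. h (N * t + fst z, snd z)) (x, y)) \<partial>lborel)"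
      by (rule Suc.IH[OF mn], subst borel_prod[symmetric]) measurable
    then show "Psi n' \<theta> (\<lambda>v. h (N * t + Xv n' m v, Yv m v)) =
               (\<integral>\<^sup>+x. erl (m - 1) \<theta> x * Q (N * t + x) \<partial>lborel)"
      unfolding Q_def by simp
  qed
  also have "\<dots> = (\<integral>\<^sup>+u. (\<integral>\<^sup>+x. erl (m - 1) \<theta> x * Q (u + x) \<partial>lborel) \<partial>Ex \<theta>)"
    by (rule scale_lemma[OF N th, where Q="\<lambda>u. \<integral>\<^sup>+x. erl (m - 1) \<theta> x * Q (u + x) \<partial>lborel"]) measurable
  also have "\<dots> = (\<integral>\<^sup>+z. erl (Suc (m - 1)) \<theta> z * Q z \<partial>lborel)"
    by (rule conv_lemma[OF th]) measurable
  also have "\<dots> = (\<integral>\<^sup>+x. erl (Suc m - 1) \<theta> x * Qf n (Suc m) \<theta> (\<lambda>y. h (x, y)) \<partial>lborel)"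
    unfolding Q_def n' using Suc.hyps by (simp add: Qf_def)
  finally show ?case .
qed



lemma cont_ae_eq:
  fixes f g :: "'a::euclidean_space \<Rightarrow> real"
  assumes S: "open S" and cf: "continuous_on S f" and cg: "continuous_on S g"
    and ae: "AE x in lborel. x \<in> S \<longrightarrow> f x = g x" and p: "p \<in> S"
  shows "f p = g p"
proof (rule ccontr)
  assume ne: "f p \<noteq> g p"
  define d where "d = \<bar>f p - g p\<bar>"
  have d: "0 < d" using ne unfolding d_def by simp
  have c: "continuous_on S (\<lambda>x. f x - g x)" using cf cg by (intro continuous_intros)
  obtain e1 where e1: "0 < e1" "\<And>x. x \<in> S \<Longrightarrow> dist x p < e1 \<Longrightarrow> dist (f x - g x) (f p - g p) < d"
    using c p d unfolding continuous_on_iff by (metis dist_commute)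
  obtain e2 where e2: "0 < e2" "ball p e2 \<subseteq> S"
    using S p open_contains_ball by blast
  define e where "e = min e1 e2"
  have e: "0 < e" using e1 e2 unfolding e_def by simp
  have sub: "ball p e \<subseteq> S" using e2 unfolding e_def by auto
  have neq: "f x \<noteq> g x" if "x \<in> ball p e" for x
  proof
    assume "f x = g x"
    have "x \<in> S" using that sub by auto
    moreover have "dist x p < e1" using that unfolding e_def by (simp add: dist_commute)
    ultimately have "dist (f x - g x) (f p - g p) < d" using e1 by blast
    then show False using \<open>f x = g x\<close> unfolding d_def by (simp add: dist_real_def)
  qed
  have "AE x in lborel. x \<notin> ball p e"
    using ae by eventually_elim (use sub neq in auto)
  then have "ball p e \<in> null_sets lborel"
    by (subst AE_iff_null_sets) auto
  then have "emeasure lborel (ball p e) = 0" by auto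
  moreover have "emeasure lborel (ball p e) > 0"
    using e by (simp add: emeasure_ball)
  ultimately show False by simp
qed



definition Gr :: "nat \<Rightarrow> nat \<Rightarrow> real \<Rightarrow> real \<times> real \<times> real \<Rightarrow> real" where
  "Gr n m \<theta> z = erlang_density (m - 1) \<theta> (fst z) * exponential_density (real (n - m) * \<theta>) (fst (snd z)) *
      exponential_density (real (n - m - 1) * \<theta>) (snd (snd z))"

lemma fst_bm[measurable]: "(fst :: real \<times> real \<Rightarrow> real) \<in> borel_measurable borel"
  by (subst borel_prod[symmetric]) measurable

lemma snd_bm[measurable]: "(snd :: real \<times> real \<Rightarrow> real) \<in> borel_measurable borel"
  by (subst borel_prod[symmetric]) measurable

lemma Gr_meas[measurable]: "Gr n m \<theta> \<in> borel_measurable borel"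
  unfolding Gr_def by (subst borel_prod[symmetric]) measurable

lemma Gr_nonneg: "0 < \<theta> \<Longrightarrow> 0 \<le> Gr n m \<theta> z"
  unfolding Gr_def by (intro mult_nonneg_nonneg) (auto simp: exponential_density_def)

lemma iter2:
  fixes F :: "'a::euclidean_space \<times> 'b::euclidean_space \<Rightarrow> ennreal"
  assumes "F \<in> borel_measurable borel"
  shows "(\<integral>\<^sup>+z. F z \<partial>lborel) = (\<integral>\<^sup>+x. (\<integral>\<^sup>+y. F (x, y) \<partial>lborel) \<partial>lborel)"
proof -
  have m: "F \<in> borel_measurable (lborel \<Otimes>\<^sub>M lborel)"
    unfolding lborel_prod using assms by simp
  have "(\<integral>\<^sup>+z. F z \<partial>lborel) = (\<integral>\<^sup>+z. F z \<partial>(lborel \<Otimes>\<^sub>M lborel))"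
    by (simp add: lborel_prod)
  also have "\<dots> = (\<integral>\<^sup>+x. (\<integral>\<^sup>+y. F (x, y) \<partial>lborel) \<partial>lborel)"
    by (rule lborel.nn_integral_fst[symmetric, OF m])
  finally show ?thesis .
qed

lemma iter3:
  fixes F :: "real \<times> real \<times> real \<Rightarrow> ennreal"
  assumes [measurable]: "F \<in> borel_measurable borel"
  shows "(\<integral>\<^sup>+z. F z \<partial>lborel) = (\<integral>\<^sup>+x. (\<integral>\<^sup>+y1. (\<integral>\<^sup>+y2. F (x, y1, y2) \<partial>lborel) \<partial>lborel) \<partial>lborel)"
proof -
  have "(\<integral>\<^sup>+z. F z \<partial>lborel) = (\<integral>\<^sup>+x. (\<integral>\<^sup>+y. F (x, y) \<partial>lborel) \<partial>lborel)"
    by (rule iter2) measurable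
  also have "\<dots> = (\<integral>\<^sup>+x. (\<integral>\<^sup>+y1. (\<integral>\<^sup>+y2. F (x, y1, y2) \<partial>lborel) \<partial>lborel) \<partial>lborel)"
  proof (rule nn_integral_cong)
    fix x :: real
    have [measurable]: "(\<lambda>y::real\<times>real. F (x, y)) \<in> borel_measurable borel"
      by measurable
    show "(\<integral>\<^sup>+y. F (x, y) \<partial>lborel) = (\<integral>\<^sup>+y1. (\<integral>\<^sup>+y2. F (x, y1, y2) \<partial>lborel) \<partial>lborel)"
      by (rule iter2) measurable
  qed
  finally show ?thesis .
qed

lemma stat_ae:
  assumes th: "0 < \<theta>" and m: "1 \<le> m" and n: "m + 2 \<le> n"
  shows "AE \<omega> in sample_measure n \<theta>. statX n m \<omega> = Xv n m (sv n \<omega>) \<and> statY n m \<omega> = Yv m (sv n \<omega>)"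
proof -
  have "AE \<omega> in sample_measure n \<theta>. \<forall>i\<in>{..<n}. 0 \<le> \<omega> i"
  proof (rule AE_finite_allI)
    fix i assume i: "i \<in> {..<n}"
    have "AE x in Ex \<theta>. 0 \<le> x"
      by (subst AE_density) (auto simp: exponential_density_def)
    then show "AE \<omega> in sample_measure n \<theta>. 0 \<le> \<omega> i"
      unfolding sample_measure_def
      by (rule AE_PiM_component[OF prob_space_exponential_density[OF th] i])
  qed simp
  then show ?thesis
  proof eventually_elim
    case (elim \<omega>)
    have mp: "map (\<lambda>i. max 0 (\<omega> i)) [0..<n] = map \<omega> [0..<n]"
      using elim by (intro map_cong) auto
    have os: "order_stat n i \<omega> = sv n \<omega> (i - 1)" if "1 \<le> i" "i \<le> n" for i
      using that unfolding order_stat_def sv_def vec_def mp by simp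
    have "(\<Sum>i=1..m. order_stat n i \<omega>) = (\<Sum>i=1..m. sv n \<omega> (i - 1))"
      using m n by (intro sum.cong) (auto simp: os)
    also have "\<dots> = (\<Sum>i<m. sv n \<omega> i)"
    proof -
      have "{1..m} = Suc ` {..<m}" by (auto simp: image_iff) (metis Suc_pred' le_simps(3) lessThan_iff less_eq_Suc_le not_less_eq_eq)
      then show ?thesis by (simp add: sum.reindex)
    qed
    finally have sx: "(\<Sum>i=1..m. order_stat n i \<omega>) = (\<Sum>i<m. sv n \<omega> i)" .
    have "statX n m \<omega> = Xv n m (sv n \<omega>)"
      unfolding statX_def Xv_def sx using m n by (simp add: os)
    moreover have "statY n m \<omega> = Yv m (sv n \<omega>)"
      unfolding statY_def Yv_def using m n by (simp add: os)
    ultimately show ?case by simp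
  qed
qed



lemma Gr_split:
  assumes th: "0 < \<theta>"
  shows "ennreal (Gr n m \<theta> (x, y1, y2)) = erl (m - 1) \<theta> x *
     (ennreal (exponential_density (real (n - m) * \<theta>) y1) *
      ennreal (exponential_density (real (n - m - 1) * \<theta>) y2))"
  unfolding Gr_def using th
  by (simp add: ennreal_mult[symmetric] exponential_density_nonneg mult.assoc del: ennreal_mult)

lemma key_h:
  fixes h :: "real \<times> real \<times> real \<Rightarrow> ennreal"
  assumes th: "0 < \<theta>" and m: "1 \<le> m" and n: "m + 2 \<le> n"
    and h[measurable]: "h \<in> borel_measurable borel"
  shows "(\<integral>\<^sup>+\<omega>. h (statX n m \<omega>, statY n m \<omega>) \<partial>sample_measure n \<theta>) =
         (\<integral>\<^sup>+z. ennreal (Gr n m \<theta> z) * h z \<partial>lborel)"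
proof -
  have "(\<integral>\<^sup>+\<omega>. h (statX n m \<omega>, statY n m \<omega>) \<partial>sample_measure n \<theta>) =
        (\<integral>\<^sup>+\<omega>. h (Xv n m (sv n \<omega>), Yv m (sv n \<omega>)) \<partial>sample_measure n \<theta>)"
    by (rule nn_integral_cong_AE) (rule eventually_mono[OF stat_ae[OF th m n]], simp)
  also have "\<dots> = Psi n \<theta> (\<lambda>w. h (Xv n m w, Yv m w))" unfolding Psi_def ..
  also have "\<dots> = (\<integral>\<^sup>+x. erl (m - 1) \<theta> x * Qf n m \<theta> (\<lambda>y. h (x, y)) \<partial>lborel)"
    by (rule lemC[OF th m n h])
  also have "\<dots> = (\<integral>\<^sup>+x. (\<integral>\<^sup>+y1. (\<integral>\<^sup>+y2. ennreal (Gr n m \<theta> (x, y1, y2)) * h (x, y1, y2) \<partial>lborel) \<partial>lborel) \<partial>lborel)"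
  proof (rule nn_integral_cong)
    fix x :: real
    have "erl (m - 1) \<theta> x * Qf n m \<theta> (\<lambda>y. h (x, y)) =
      (\<integral>\<^sup>+y1. erl (m - 1) \<theta> x * (ennreal (exponential_density (real (n - m) * \<theta>) y1) *
      (\<integral>\<^sup>+y2. ennreal (exponential_density (real (n - m - 1) * \<theta>) y2) * h (x, y1, y2) \<partial>lborel)) \<partial>lborel)"
      unfolding Qf_def by (rule nn_integral_cmult[symmetric]) measurable
    also have "\<dots> = (\<integral>\<^sup>+y1. (\<integral>\<^sup>+y2. (erl (m - 1) \<theta> x * ennreal (exponential_density (real (n - m) * \<theta>) y1)) *
       (ennreal (exponential_density (real (n - m - 1) * \<theta>) y2) * h (x, y1, y2)) \<partial>lborel) \<partial>lborel)"
      by (intro nn_integral_cong) (subst nn_integral_cmult, measurable, simp add: mult.assoc)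
    also have "\<dots> = (\<integral>\<^sup>+y1. (\<integral>\<^sup>+y2. ennreal (Gr n m \<theta> (x, y1, y2)) * h (x, y1, y2) \<partial>lborel) \<partial>lborel)"
      by (intro nn_integral_cong) (simp add: Gr_split[OF th] mult.assoc)
    finally show "erl (m - 1) \<theta> x * Qf n m \<theta> (\<lambda>y. h (x, y)) =
      (\<integral>\<^sup>+y1. (\<integral>\<^sup>+y2. ennreal (Gr n m \<theta> (x, y1, y2)) * h (x, y1, y2) \<partial>lborel) \<partial>lborel)" .
  qed
  also have "\<dots> = (\<integral>\<^sup>+z. ennreal (Gr n m \<theta> z) * h z \<partial>lborel)"
    by (rule iter3[symmetric]) measurable
  finally show ?thesis .
qed

lemma dens_id:
  fixes f :: "real \<Rightarrow> real \<Rightarrow> real \<Rightarrow> real \<Rightarrow> real"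
  assumes th: "0 < \<theta>" and m: "1 \<le> m" and n: "m + 2 \<le> n"
    and fn: "\<And>x y1 y2. 0 \<le> f \<theta> x y1 y2"
    and fd: "distributed (sample_measure n \<theta>) lborel (\<lambda>\<omega>. (statX n m \<omega>, statY n m \<omega>))
          (\<lambda>(x, y1, y2). ennreal (f \<theta> x y1 y2))"
    and fc: "continuous_on ({0<..} \<times> {0<..} \<times> {0<..}) (\<lambda>(x, y1, y2). f \<theta> x y1 y2)"
    and pos: "0 < x" "0 < y1" "0 < y2"
  shows "f \<theta> x y1 y2 = Gr n m \<theta> (x, y1, y2)"
proof -
  define T where "T = (\<lambda>\<omega>. (statX n m \<omega>, statY n m \<omega>))"
  define F where "F = (\<lambda>(x, y1, y2). ennreal (f \<theta> x y1 y2))"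
  define Gn where "Gn = (\<lambda>z. ennreal (Gr n m \<theta> z))"
  have d: "distr (sample_measure n \<theta>) lborel T = density lborel F"
    and mF: "F \<in> borel_measurable lborel" and mT: "T \<in> measurable (sample_measure n \<theta>) lborel"
    using fd unfolding distributed_def T_def F_def by auto
  have mG: "Gn \<in> borel_measurable lborel" unfolding Gn_def by simp
  have "density lborel F = density lborel Gn"
  proof (rule measure_eqI)
    fix A assume A: "A \<in> sets (density lborel F)"
    then have A': "A \<in> sets borel" by simp
    have "emeasure (density lborel F) A = emeasure (distr (sample_measure n \<theta>) lborel T) A"
      by (simp add: d)
    also have "\<dots> = (\<integral>\<^sup>+z. indicator A z \<partial>distr (sample_measure n \<theta>) lborel T)"
      using A' by (simp add: nn_integral_indicator)
    also have "\<dots> = (\<integral>\<^sup>+\<omega>. indicator A (T \<omega>) \<partial>sample_measure n \<theta>)"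
      using A' by (intro nn_integral_distr mT) simp
    also have "\<dots> = (\<integral>\<^sup>+z. Gn z * indicator A z \<partial>lborel)"
      unfolding T_def Gn_def using A' by (intro key_h[OF th m n]) simp
    also have "\<dots> = emeasure (density lborel Gn) A"
      using A' mG by (simp add: emeasure_density)
    finally show "emeasure (density lborel F) A = emeasure (density lborel Gn) A" .
  qed simp
  then have ae: "AE z in lborel. F z = Gn z"
    by (rule sigma_finite_measure.density_unique[OF sigma_finite_lborel mF mG])
  define fr where "fr = (\<lambda>z. f \<theta> (fst z) (fst (snd z)) (snd (snd z)))"
  let ?S = "({0<..} :: real set) \<times> ({0<..} :: real set) \<times> ({0<..} :: real set)"
  have ae2: "AE z in lborel. z \<in> ?S \<longrightarrow> fr z = Gr n m \<theta> z"
    using ae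
  proof eventually_elim
    case (elim z)
    then have "ennreal (fr z) = ennreal (Gr n m \<theta> z)"
      unfolding F_def Gn_def fr_def by (simp add: case_prod_beta)
    then show ?case using fn Gr_nonneg[OF th] unfolding fr_def by (simp add: ennreal_inj)
  qed
  have cf: "continuous_on ?S fr"
    using fc unfolding fr_def by (simp add: case_prod_beta)
  have cg: "continuous_on ?S (Gr n m \<theta>)"
  proof -
    have "continuous_on ?S (\<lambda>z. (\<theta> ^ Suc (m - 1) * fst z ^ (m - 1) * exp (- \<theta> * fst z) / fact (m - 1)) *
        ((real (n - m) * \<theta>) ^ Suc 0 * fst (snd z) ^ 0 * exp (- (real (n - m) * \<theta>) * fst (snd z)) / fact 0) *
        ((real (n - m - 1) * \<theta>) ^ Suc 0 * snd (snd z) ^ 0 * exp (- (real (n - m - 1) * \<theta>) * snd (snd z)) / fact 0))"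
      by (intro continuous_intros) auto
    moreover have "\<And>z. z \<in> ?S \<Longrightarrow> Gr n m \<theta> z = (\<theta> ^ Suc (m - 1) * fst z ^ (m - 1) * exp (- \<theta> * fst z) / fact (m - 1)) *
        ((real (n - m) * \<theta>) ^ Suc 0 * fst (snd z) ^ 0 * exp (- (real (n - m) * \<theta>) * fst (snd z)) / fact 0) *
        ((real (n - m - 1) * \<theta>) ^ Suc 0 * snd (snd z) ^ 0 * exp (- (real (n - m - 1) * \<theta>) * snd (snd z)) / fact 0)"
    proof -
      fix z assume "z \<in> ?S"
      then have h1: "(fst z < 0) = False" and h2: "(fst (snd z) < 0) = False" and h3: "(snd (snd z) < 0) = False"
        by (auto simp: mem_Times_iff)
      show "Gr n m \<theta> z = (\<theta> ^ Suc (m - 1) * fst z ^ (m - 1) * exp (- \<theta> * fst z) / fact (m - 1)) *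
        ((real (n - m) * \<theta>) ^ Suc 0 * fst (snd z) ^ 0 * exp (- (real (n - m) * \<theta>) * fst (snd z)) / fact 0) *
        ((real (n - m - 1) * \<theta>) ^ Suc 0 * snd (snd z) ^ 0 * exp (- (real (n - m - 1) * \<theta>) * snd (snd z)) / fact 0)"
        unfolding Gr_def erlang_density_def exponential_density_def h1 h2 h3 if_False by (rule refl)
    qed
    ultimately show ?thesis using continuous_on_cong by (metis (no_types, lifting))
  qed
  have "fr (x, y1, y2) = Gr n m \<theta> (x, y1, y2)"
    by (rule cont_ae_eq[OF _ cf cg ae2]) (auto intro!: open_Times simp: pos)
  then show ?thesis unfolding fr_def by simp
qed



lemma exp1_nn:
  assumes "0 < A"
  shows "(\<integral>\<^sup>+y. ennreal (indicator {0<..} y * exponential_density A y) \<partial>lborel) = 1"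
proof -
  have "(\<integral>\<^sup>+y. ennreal (indicator {0<..} y * exponential_density A y) \<partial>lborel) =
        (\<integral>\<^sup>+y. ennreal (erlang_density 0 A y * y ^ 0) \<partial>lborel)"
  proof (rule nn_integral_cong_AE)
    show "AE y in lborel. ennreal (indicator {0<..} y * exponential_density A y) = ennreal (erlang_density 0 A y * y ^ 0)"
      by (rule eventually_mono[OF AE_lborel_singleton[of 0]]) (auto simp: indicator_def exponential_density_def)
  qed
  also have "\<dots> = 1" using nn_integral_erlang_ith_moment[OF assms, of 0 0] by simp
  finally show ?thesis .
qed

lemma exp2_int:
  assumes A1: "0 < A1" and A2: "0 < A2"
  shows "(\<integral>y\<in>{0<..} \<times> {0<..}. exponential_density A1 (fst y) * exponential_density A2 (snd y) \<partial>lborel) = 1"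
proof -
  define g where "g = (\<lambda>y::real\<times>real. indicator {0<..} (fst y) * indicator {0<..} (snd y) * (exponential_density A1 (fst y) * exponential_density A2 (snd y)))"
  have gm[measurable]: "g \<in> borel_measurable borel" unfolding g_def by measurable
  have "(\<integral>\<^sup>+y. ennreal (g y) \<partial>lborel) = (\<integral>\<^sup>+y1. (\<integral>\<^sup>+y2. ennreal (g (y1, y2)) \<partial>lborel) \<partial>lborel)"
    by (rule iter2) measurable
  also have "\<dots> = (\<integral>\<^sup>+y1. ennreal (indicator {0<..} y1 * exponential_density A1 y1) *
                      (\<integral>\<^sup>+y2. ennreal (indicator {0<..} y2 * exponential_density A2 y2) \<partial>lborel) \<partial>lborel)"
  proof (rule nn_integral_cong)
    fix y1 :: real
    show "(\<integral>\<^sup>+y2. ennreal (g (y1, y2)) \<partial>lborel) = ennreal (indicator {0<..} y1 * exponential_density A1 y1) *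
                      (\<integral>\<^sup>+y2. ennreal (indicator {0<..} y2 * exponential_density A2 y2) \<partial>lborel)"
      unfolding g_def using A1 A2
      by (subst nn_integral_cmult[symmetric]) (measurable, auto intro!: nn_integral_cong
          simp: indicator_def ennreal_mult[symmetric] exponential_density_nonneg simp del: ennreal_mult)
  qed
  also have "\<dots> = 1"
    using exp1_nn[OF A2] exp1_nn[OF A1] by simp
  finally have nn: "(\<integral>\<^sup>+y. ennreal (g y) \<partial>lborel) = ennreal 1" by simp
  have "has_bochner_integral lborel g 1"
    by (rule has_bochner_integral_nn_integral[OF _ _ _ nn])
       (use A1 A2 in \<open>auto simp: g_def exponential_density_nonneg\<close>)
  moreover have "(\<lambda>y. indicator ({0<..} \<times> {0<..}) y *\<^sub>R (exponential_density A1 (fst y) * exponential_density A2 (snd y))) = g"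
    by (auto simp: g_def fun_eq_iff indicator_def)
  ultimately show ?thesis
    unfolding set_lebesgue_integral_def by (simp add: has_bochner_integral_integral_eq)
qed

lemma gamma_int:
  fixes a c :: real
  assumes a: "0 < a" and c: "0 < c"
  shows "(\<integral>t\<in>{0<..}. t powr (a - 1) * exp (- (c * t)) \<partial>lborel) = Gamma a / c powr a"
proof -
  define g where "g = (\<lambda>t::real. indicator {0<..} t * (t powr (a - 1) * exp (- (c * t))))"
  have gm[measurable]: "g \<in> borel_measurable borel" unfolding g_def by measurable
  have "ennreal (Gamma a) = (\<integral>\<^sup>+t. ennreal (indicator {0..} t * t powr (a - 1) / exp t) \<partial>lborel)"
    by (rule Gamma_conv_nn_integral_real[OF a])
  also have "\<dots> = ennreal \<bar>c\<bar> * (\<integral>\<^sup>+u. ennreal (indicator {0..} (0 + c * u) * (0 + c * u) powr (a - 1) / exp (0 + c * u)) \<partial>lborel)"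
    by (rule nn_integral_real_affine) (use c in auto)
  also have "\<dots> = ennreal c * (\<integral>\<^sup>+u. ennreal (c powr (a - 1)) * ennreal (g u) \<partial>lborel)"
  proof -
    have "(\<integral>\<^sup>+u. ennreal (indicator {0..} (0 + c * u) * (0 + c * u) powr (a - 1) / exp (0 + c * u)) \<partial>lborel) =
          (\<integral>\<^sup>+u. ennreal (c powr (a - 1)) * ennreal (g u) \<partial>lborel)"
    proof (rule nn_integral_cong_AE)
      show "AE u in lborel. ennreal (indicator {0..} (0 + c * u) * (0 + c * u) powr (a - 1) / exp (0 + c * u)) =
              ennreal (c powr (a - 1)) * ennreal (g u)"
      proof (rule eventually_mono[OF AE_lborel_singleton[of 0]])
        fix u :: real assume u: "u \<noteq> 0"
        show "ennreal (indicator {0..} (0 + c * u) * (0 + c * u) powr (a - 1) / exp (0 + c * u)) =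
              ennreal (c powr (a - 1)) * ennreal (g u)"
        proof (cases "0 < u")
          case True
          then have "indicator {0..} (0 + c * u) * (0 + c * u) powr (a - 1) / exp (0 + c * u) =
                c powr (a - 1) * g u"
            using c by (simp add: g_def powr_mult exp_minus field_simps)
          then show ?thesis using c True by (simp add: ennreal_mult[symmetric] g_def del: ennreal_mult)
        next
          case False
          then have "u < 0" using u by simp
          then have "c * u < 0" using c by (simp add: mult_pos_neg)
          then show ?thesis using \<open>u < 0\<close> by (simp add: g_def indicator_def)
        qed
      qed
    qed
    then show ?thesis using c by simp
  qed
  also have "\<dots> = ennreal (c powr a) * (\<integral>\<^sup>+u. ennreal (g u) \<partial>lborel)"
  proof -
    have "c * c powr (a - 1) = c powr a" using c by (simp add: powr_mult_base)
    then show ?thesis using c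
      by (subst nn_integral_cmult) (measurable, simp add: ennreal_mult[symmetric] mult.assoc[symmetric] del: ennreal_mult)
  qed
  finally have eq: "ennreal (c powr a) * (\<integral>\<^sup>+u. ennreal (g u) \<partial>lborel) = ennreal (Gamma a)" ..
  have cpos: "0 < c powr a" using c by simp
  have "(\<integral>\<^sup>+u. ennreal (g u) \<partial>lborel) = ennreal (1 / c powr a) * (ennreal (c powr a) * (\<integral>\<^sup>+u. ennreal (g u) \<partial>lborel))"
    using cpos by (simp add: mult.assoc[symmetric] ennreal_mult[symmetric] del: ennreal_mult)
  also have "\<dots> = ennreal (Gamma a / c powr a)"
    unfolding eq using cpos a by (simp add: ennreal_mult[symmetric] Gamma_real_pos less_imp_le del: ennreal_mult)
  finally have nn: "(\<integral>\<^sup>+u. ennreal (g u) \<partial>lborel) = ennreal (Gamma a / c powr a)" .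
  have "has_bochner_integral lborel g (Gamma a / c powr a)"
    by (rule has_bochner_integral_nn_integral[OF _ _ _ nn])
       (use a c in \<open>auto simp: g_def Gamma_real_pos less_imp_le\<close>)
  then show ?thesis
    unfolding set_lebesgue_integral_def g_def by (simp add: has_bochner_integral_integral_eq)
qed



lemma alg_final:
  fixes a c s A1 A2 C y1 y2 :: real
  assumes a: "0 < a" and c: "0 < c" and C: "0 < C" and s: "s = A1 * y1 + A2 * y2" and cs: "0 < c + s"
  shows "(A1 * A2 * C / (C * (Gamma a / c powr a))) * (Gamma (a + 2) / (c + s) powr (a + 2)) =
         pareto2_biv a (A1 / c) (A2 / c) y1 y2"
proof -
  have G: "0 < Gamma a" using a by (simp add: Gamma_real_pos)
  have g2: "Gamma (a + 2) = (a + 1) * (a * Gamma a)"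
  proof -
    have n1: "a \<notin> \<int>\<^sub>\<le>\<^sub>0" "a + 1 \<notin> \<int>\<^sub>\<le>\<^sub>0" using a by (auto dest: nonpos_Ints_nonpos)
    show ?thesis using Gamma_plus1[OF n1(2)] Gamma_plus1[OF n1(1)] by (simp add: add.assoc)
  qed
  have b: "1 + A1 / c * y1 + A2 / c * y2 = (c + s) / c" using c s by (simp add: field_simps)
  have p: "((c + s) / c) powr (a + 2) = (c + s) powr (a + 2) / c powr (a + 2)"
    using c cs by (simp add: powr_divide)
  have q: "c powr (a + 2) = c powr a * c ^ 2"
    using c by (simp add: powr_add powr_numeral)
  have cp: "0 < c powr a" "0 < (c + s) powr (a + 2)" using c cs by auto
  show ?thesis
    unfolding pareto2_biv_def b p q g2 using c C G cp by (simp add: field_simps power2_eq_square)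
qed



lemma S2_sets[simp]: "({0<..} \<times> {0<..} :: (real \<times> real) set) \<in> sets borel"
  by (intro borel_open open_Times open_greaterThan)

theorem corollary1:
  fixes m n :: nat and \<alpha> \<beta> :: real
    and f :: "real \<Rightarrow> real \<Rightarrow> real \<Rightarrow> real \<Rightarrow> real"
  assumes "1 \<le> m" and "m + 2 \<le> n"
    and "(0 < \<alpha> \<and> 0 < \<beta>) \<or> (\<alpha> = 0 \<and> \<beta> = 0)"
    and f_nonneg: "\<And>\<theta> x y1 y2. 0 \<le> f \<theta> x y1 y2"
    and f_density: "\<And>\<theta>. 0 < \<theta> \<Longrightarrow>
        distributed (sample_measure n \<theta>) lborel (\<lambda>\<omega>. (statX n m \<omega>, statY n m \<omega>))
          (\<lambda>(x, y1, y2). ennreal (f \<theta> x y1 y2))"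
    and f_cont: "\<And>\<theta>. 0 < \<theta> \<Longrightarrow>
        continuous_on ({0<..} \<times> {0<..} \<times> {0<..}) (\<lambda>(x, y1, y2). f \<theta> x y1 y2)"
  shows "\<forall>x>0. \<forall>y1>0. \<forall>y2>0.
           bayes_pred f \<alpha> \<beta> x y1 y2 =
           pareto2_biv (real m + \<alpha>) (real (n - m) / (x + \<beta>)) (real (n - m - 1) / (x + \<beta>)) y1 y2"
proof (intro allI impI)
  fix x y1 y2 :: real
  assume x: "0 < x" and y1: "0 < y1" and y2: "0 < y2"
  note m = assms(1) and n = assms(2)
  have fx: "f t x' z1 z2 = Gr n m t (x', z1, z2)" if "0 < t" "0 < x'" "0 < z1" "0 < z2" for t x' z1 z2
    by (rule dens_id[where \<theta>=t and f=f and m=m and n=n, OF that(1) m n f_nonneg f_density[OF that(1)] f_cont[OF that(1)] that(2-4)])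
  define A1 where "A1 = real (n - m)"
  define A2 where "A2 = real (n - m - 1)"
  define a where "a = real m + \<alpha>"
  define c where "c = x + \<beta>"
  define s where "s = A1 * y1 + A2 * y2"
  define C where "C = x ^ (m - 1) / fact (m - 1)"
  have A1: "0 < A1" and A2: "0 < A2" using n unfolding A1_def A2_def by auto
  have a: "0 < a" using assms(3) m unfolding a_def by auto
  have c: "0 < c" using assms(3) x unfolding c_def by auto
  have s: "0 \<le> s" using A1 A2 y1 y2 unfolding s_def by simp
  have C: "0 < C" using x unfolding C_def by simp
  have erl_eq: "erlang_density (m - 1) t x = C * (t powr real m * exp (- (x * t)))" if t: "0 < t" for t
  proof -
    have "t ^ Suc (m - 1) = t powr real m" using t m by (simp add: powr_realpow)
    then show ?thesis using x unfolding erlang_density_def C_def by (simp add: mult.commute)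
  qed
  have marg: "marg_X f t x = erlang_density (m - 1) t x" if t: "0 < t" for t
  proof -
    have "marg_X f t x = (\<integral>y\<in>{0<..} \<times> {0<..}. erlang_density (m - 1) t x *
             (exponential_density (A1 * t) (fst y) * exponential_density (A2 * t) (snd y)) \<partial>lborel)"
      unfolding marg_X_def
      by (rule set_lebesgue_integral_cong) (auto simp: fx t x Gr_def A1_def A2_def mult.assoc)
    also have "\<dots> = erlang_density (m - 1) t x *
        (\<integral>y\<in>{0<..} \<times> {0<..}. exponential_density (A1 * t) (fst y) * exponential_density (A2 * t) (snd y) \<partial>lborel)"
      by (rule set_integral_mult_right)
    also have "\<dots> = erlang_density (m - 1) t x" using exp2_int[of "A1 * t" "A2 * t"] A1 A2 t by simp
    finally show ?thesis .
  qed
  have mx: "marg_X f t x = C * (t powr real m * exp (- (x * t)))" if t: "0 < t" for t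
    by (simp only: marg[OF t] erl_eq[OF t])
  define Z where "Z = (\<integral>t\<in>{0<..}. marg_X f t x * prior \<alpha> \<beta> t \<partial>lborel)"
  have Zeq: "Z = C * (Gamma a / c powr a)"
  proof -
    have "Z = (\<integral>t\<in>{0<..}. C * (t powr (a - 1) * exp (- (c * t))) \<partial>lborel)"
      unfolding Z_def
    proof (rule set_lebesgue_integral_cong)
      show "\<forall>t. t \<in> {0<..} \<longrightarrow> marg_X f t x * prior \<alpha> \<beta> t = C * (t powr (a - 1) * exp (- (c * t)))"
      proof (intro allI impI)
        fix t :: real assume "t \<in> {0<..}"
        then have t: "0 < t" by simp
        have pw: "t powr real m * t powr (\<alpha> - 1) = t powr (a - 1)"
          unfolding a_def by (simp add: powr_add[symmetric] add_diff_eq)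
        have ex: "exp (- (x * t)) * exp (- \<beta> * t) = exp (- (c * t))"
          unfolding c_def by (subst exp_add[symmetric], rule arg_cong[where f=exp]) (simp add: algebra_simps)
        have "marg_X f t x * prior \<alpha> \<beta> t = C * ((t powr real m * t powr (\<alpha> - 1)) * (exp (- (x * t)) * exp (- \<beta> * t)))"
          using t by (simp add: mx prior_def mult_ac)
        then show "marg_X f t x * prior \<alpha> \<beta> t = C * (t powr (a - 1) * exp (- (c * t)))"
          unfolding pw ex .
      qed
    qed simp
    also have "\<dots> = C * (\<integral>t\<in>{0<..}. t powr (a - 1) * exp (- (c * t)) \<partial>lborel)"
      by (rule set_integral_mult_right)
    also have "\<dots> = C * (Gamma a / c powr a)" using gamma_int[OF a c] by simp
    finally show ?thesis .
  qed
  have Zpos: "0 < Z" unfolding Zeq using C a c by (simp add: Gamma_real_pos)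
  define K where "K = A1 * A2 * C / Z"
  have "bayes_pred f \<alpha> \<beta> x y1 y2 = (\<integral>t\<in>{0<..}. K * (t powr ((a + 2) - 1) * exp (- ((c + s) * t))) \<partial>lborel)"
    unfolding bayes_pred_def
  proof (rule set_lebesgue_integral_cong)
    show "\<forall>t. t \<in> {0<..} \<longrightarrow> cond_dens f t x y1 y2 * posterior f \<alpha> \<beta> x t =
              K * (t powr ((a + 2) - 1) * exp (- ((c + s) * t)))"
    proof (intro allI impI)
      fix t :: real assume "t \<in> {0<..}"
      then have t: "0 < t" by simp
      have mpos: "0 < marg_X f t x" using mx[OF t] C t by simp
      have gr: "f t x y1 y2 = marg_X f t x * ((A1 * t * exp (- (A1 * t * y1))) * (A2 * t * exp (- (A2 * t * y2))))"
        using t x y1 y2 A1 A2 by (simp add: fx marg Gr_def A1_def A2_def erlang_density_def)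
      have "cond_dens f t x y1 y2 * posterior f \<alpha> \<beta> x t =
            ((A1 * t * exp (- (A1 * t * y1))) * (A2 * t * exp (- (A2 * t * y2)))) * (marg_X f t x * prior \<alpha> \<beta> t / Z)"
        unfolding cond_dens_def posterior_def Z_def[symmetric] gr using mpos by simp
      also have "\<dots> = (A1 * A2 * C / Z) * ((t powr real m * t * t * t powr (\<alpha> - 1)) *
              (exp (- (A1 * t * y1)) * exp (- (A2 * t * y2)) * exp (- (x * t)) * exp (- \<beta> * t)))"
        using t by (simp add: mx prior_def field_simps)
      also have "t powr real m * t * t * t powr (\<alpha> - 1) = t powr ((a + 2) - 1)"
      proof -
        have "t powr real m * t * t * t powr (\<alpha> - 1) = t powr real m * t powr 1 * t powr 1 * t powr (\<alpha> - 1)"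
          using t by simp
        also have "\<dots> = t powr (real m + 1 + 1 + (\<alpha> - 1))" by (simp only: powr_add)
        finally show ?thesis unfolding a_def by (simp add: algebra_simps)
      qed
      also have "exp (- (A1 * t * y1)) * exp (- (A2 * t * y2)) * exp (- (x * t)) * exp (- \<beta> * t) =
                 exp (- ((c + s) * t))"
        unfolding c_def s_def exp_add[symmetric] by (rule arg_cong[where f=exp]) (simp add: algebra_simps)
      finally show "cond_dens f t x y1 y2 * posterior f \<alpha> \<beta> x t = K * (t powr ((a + 2) - 1) * exp (- ((c + s) * t)))"
        unfolding K_def .
    qed
  qed simp
  also have "\<dots> = K * (\<integral>t\<in>{0<..}. t powr ((a + 2) - 1) * exp (- ((c + s) * t)) \<partial>lborel)"
    by (rule set_integral_mult_right)
  also have "\<dots> = K * (Gamma (a + 2) / (c + s) powr (a + 2))"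
    using gamma_int[of "a + 2" "c + s"] a c s by simp
  also have "\<dots> = pareto2_biv a (A1 / c) (A2 / c) y1 y2"
    unfolding K_def Zeq by (rule alg_final[OF a c C s_def]) (use c s in simp)
  finally show "bayes_pred f \<alpha> \<beta> x y1 y2 =
           pareto2_biv (real m + \<alpha>) (real (n - m) / (x + \<beta>)) (real (n - m - 1) / (x + \<beta>)) y1 y2"
    unfolding a_def A1_def A2_def c_def .
qed

end
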